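(* Every graph of pathwidth at most $1$ and order $n$ has at most $2^{n/2}$ minimal dominating sets. The bound is attained by the path on $2$ vertices.
   Context: A dominating set of $G=(V,E)$ is a set $D\subseteq V$ such that every vertex outside $D$ has a neighbour in $D$; it is minimal if no proper subset is dominating. Order = number of vertices; pathwidth is the standard notion. *)

theory Defs
  imports Complex_Main
begin

definition simple_graph :: "'a set \<Rightarrow> ('a \<Rightarrow> 'a \<Rightarrow> bool) \<Rightarrow> bool" where
  "simple_graph V E \<longleftrightarrow> finite V
     \<and> (\<forall>x y. E x y \<longrightarrow> x \<in> V \<and> y \<in> V)
     \<and> (\<forall>x y. E x y \<longrightarrow> E y x)
     \<and> (\<forall>x. \<not> E x x)"

definition dominating_set :: "'a set \<Rightarrow> ('a \<Rightarrow> 'a \<Rightarrow> bool) \<Rightarrow> 'a set \<Rightarrow> bool" where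
  "dominating_set V E D \<longleftrightarrow> D \<subseteq> V \<and> (\<forall>v \<in> V - D. \<exists>u \<in> D. E v u)"

definition minimal_dominating_set :: "'a set \<Rightarrow> ('a \<Rightarrow> 'a \<Rightarrow> bool) \<Rightarrow> 'a set \<Rightarrow> bool" where
  "minimal_dominating_set V E D \<longleftrightarrow> dominating_set V E D
     \<and> (\<forall>D'. D' \<subset> D \<longrightarrow> \<not> dominating_set V E D')"

definition path_decomposition :: "'a set \<Rightarrow> ('a \<Rightarrow> 'a \<Rightarrow> bool) \<Rightarrow> 'a set list \<Rightarrow> bool" where
  "path_decomposition V E Bs \<longleftrightarrow>
     (\<forall>B \<in> set Bs. B \<subseteq> V)
     \<and> (\<forall>v \<in> V. \<exists>B \<in> set Bs. v \<in> B)
     \<and> (\<forall>u v. E u v \<longrightarrow> (\<exists>B \<in> set Bs. u \<in> B \<and> v \<in> B))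
     \<and> (\<forall>v i j k. i \<le> j \<and> j \<le> k \<and> k < length Bs \<and> v \<in> Bs ! i \<and> v \<in> Bs ! k
          \<longrightarrow> v \<in> Bs ! j)"

text \<open>Width of a decomposition = max bag size minus 1; pathwidth = least width
(natural-number valued, so the null graph gets pathwidth 0).\<close>
definition pathwidth :: "'a set \<Rightarrow> ('a \<Rightarrow> 'a \<Rightarrow> bool) \<Rightarrow> nat" where
  "pathwidth V E = (LEAST k. \<exists>Bs. path_decomposition V E Bs
                        \<and> (\<forall>B \<in> set Bs. card B \<le> k + 1))"

end

theory Submission
  imports Defs
begin


definition dm :: "('a \<Rightarrow> 'a \<Rightarrow> bool) \<Rightarrow> 'a set \<Rightarrow> 'a \<Rightarrow> bool" where
  "dm E D v \<longleftrightarrow> v \<in> D \<or> (\<exists>u\<in>D. E v u)"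

definition priv :: "'a set \<Rightarrow> ('a \<Rightarrow> 'a \<Rightarrow> bool) \<Rightarrow> 'a set \<Rightarrow> 'a \<Rightarrow> 'a \<Rightarrow> bool" where
  "priv V E D w u \<longleftrightarrow> w \<in> V \<and> (w = u \<or> E w u) \<and> (\<forall>u'\<in>D. (w = u' \<or> E w u') \<longrightarrow> u' = u)"

lemma mds_iff:
  "minimal_dominating_set V E D \<longleftrightarrow> D \<subseteq> V \<and> (\<forall>v\<in>V. dm E D v) \<and> (\<forall>u\<in>D. \<exists>w. priv V E D w u)"
proof
  assume m: "minimal_dominating_set V E D"
  hence d: "dominating_set V E D" and mn: "\<forall>D'. D' \<subset> D \<longrightarrow> \<not> dominating_set V E D'"
    by (auto simp: minimal_dominating_set_def)
  have sub: "D \<subseteq> V" using d by (simp add: dominating_set_def)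
  have dmv: "\<forall>v\<in>V. dm E D v" using d by (auto simp: dominating_set_def dm_def)
  have "\<exists>w. priv V E D w u" if u: "u \<in> D" for u
  proof -
    have "\<not> dominating_set V E (D - {u})" using mn u by blast
    then obtain v where v: "v \<in> V" "v \<notin> D - {u}" and nv: "\<not> (\<exists>u'\<in>D - {u}. E v u')"
      using sub by (auto simp: dominating_set_def)
    show ?thesis
    proof (cases "v = u")
      case True
      hence "priv V E D u u" using v nv by (auto simp: priv_def)
      thus ?thesis by blast
    next
      case False
      hence "v \<notin> D" using v by blast
      then obtain u' where "u' \<in> D" "E v u'" using dmv v by (auto simp: dm_def)
      hence "u' = u" using nv by blast
      hence "priv V E D v u" using v nv \<open>v \<notin> D\<close> \<open>E v u'\<close> by (auto simp: priv_def)
      thus ?thesis by blast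
    qed
  qed
  thus "D \<subseteq> V \<and> (\<forall>v\<in>V. dm E D v) \<and> (\<forall>u\<in>D. \<exists>w. priv V E D w u)" using sub dmv by blast
next
  assume a: "D \<subseteq> V \<and> (\<forall>v\<in>V. dm E D v) \<and> (\<forall>u\<in>D. \<exists>w. priv V E D w u)"
  have d: "dominating_set V E D" using a by (auto simp: dominating_set_def dm_def)
  have "\<not> dominating_set V E D'" if "D' \<subset> D" for D'
  proof
    assume d': "dominating_set V E D'"
    obtain u where u: "u \<in> D" "u \<notin> D'" using \<open>D' \<subset> D\<close> by blast
    then obtain w where w: "priv V E D w u" using a by blast
    have wV: "w \<in> V" using w by (simp add: priv_def)
    show False
    proof (cases "w \<in> D'")
      case True
      hence "w = u" using w \<open>D' \<subset> D\<close> by (auto simp: priv_def)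
      thus False using True u by simp
    next
      case False
      then obtain u'' where "u'' \<in> D'" "E w u''" using d' wV by (auto simp: dominating_set_def)
      hence "u'' = u" using w \<open>D' \<subset> D\<close> by (auto simp: priv_def)
      thus False using \<open>u'' \<in> D'\<close> u by simp
    qed
  qed
  thus "minimal_dominating_set V E D" using d by (auto simp: minimal_dominating_set_def)
qed

definition partial :: "'a set \<Rightarrow> ('a \<Rightarrow> 'a \<Rightarrow> bool) \<Rightarrow> 'a \<Rightarrow> 'a set \<Rightarrow> bool" where
  "partial V E b D \<longleftrightarrow> D \<subseteq> V \<and> (\<forall>v\<in>V. v \<noteq> b \<longrightarrow> dm E D v)
     \<and> (\<forall>u\<in>D. u \<noteq> b \<longrightarrow> (\<exists>w. priv V E D w u))"

definition isfrag :: "'a set \<Rightarrow> ('a \<Rightarrow> 'a \<Rightarrow> bool) \<Rightarrow> 'a \<Rightarrow> 'a set \<Rightarrow> bool" where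
  "isfrag V E b D \<longleftrightarrow> (\<exists>u\<in>D. priv V E D b u \<and> \<not> (\<exists>w. w \<noteq> b \<and> priv V E D w u))"

definition st_safe where "st_safe V E b = {D. partial V E b D \<and> b \<in> D \<and> (\<exists>w. w \<noteq> b \<and> priv V E D w b)}"
definition st_self where "st_self V E b = {D. partial V E b D \<and> b \<in> D \<and> \<not> (\<exists>w. w \<noteq> b \<and> priv V E D w b) \<and> priv V E D b b}"
definition st_none where "st_none V E b = {D. partial V E b D \<and> b \<in> D \<and> \<not> (\<exists>w. priv V E D w b)}"
definition st_undom where "st_undom V E b = {D. partial V E b D \<and> b \<notin> D \<and> \<not> dm E D b}"
definition st_frag where "st_frag V E b = {D. partial V E b D \<and> b \<notin> D \<and> dm E D b \<and> isfrag V E b D}"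
definition st_ok where "st_ok V E b = {D. partial V E b D \<and> b \<notin> D \<and> dm E D b \<and> \<not> isfrag V E b D}"

lemma fin_sets:
  assumes "finite V"
  shows "finite (st_safe V E b)" "finite (st_self V E b)" "finite (st_none V E b)"
        "finite (st_undom V E b)" "finite (st_frag V E b)" "finite (st_ok V E b)"
        "finite {D. minimal_dominating_set V E D}"
proof -
  have F: "finite (Pow V)" using assms by simp
  have "\<And>S. (\<forall>D\<in>S. partial V E b D) \<Longrightarrow> finite S"
    by (rule finite_subset[OF _ F]) (auto simp: partial_def)
  thus "finite (st_safe V E b)" "finite (st_self V E b)" "finite (st_none V E b)"
        "finite (st_undom V E b)" "finite (st_frag V E b)" "finite (st_ok V E b)"
    by (auto simp: st_safe_def st_self_def st_none_def st_undom_def st_frag_def st_ok_def)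
  show "finite {D. minimal_dominating_set V E D}"
    by (rule finite_subset[OF _ F]) (auto simp: mds_iff)
qed

lemma card_map_le2:
  assumes "inj_on g S" "g ` S \<subseteq> A \<union> B" "finite A" "finite B"
  shows "card S \<le> card A + card B"
proof -
  have "card S = card (g ` S)" using assms(1) by (simp add: card_image)
  also have "\<dots> \<le> card (A \<union> B)" using assms by (intro card_mono) auto
  also have "\<dots> \<le> card A + card B" by (rule card_Un_le)
  finally show ?thesis .
qed

lemma card_map_le3:
  assumes "inj_on g S" "g ` S \<subseteq> A \<union> B \<union> C" "finite A" "finite B" "finite C"
  shows "card S \<le> card A + card B + card C"
proof -
  have "card S \<le> card (A \<union> B) + card C" using card_map_le2[OF assms(1,2)] assms by auto
  also have "card (A \<union> B) \<le> card A + card B" by (rule card_Un_le)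
  finally show ?thesis by simp
qed

lemma card_map_le1:
  assumes "inj_on g S" "g ` S \<subseteq> A" "finite A"
  shows "card S \<le> card A"
  using card_map_le2[of g S A "{}"] assms by simp

lemma inj_in: "(\<forall>D\<in>S. x \<in> D) \<Longrightarrow> inj_on (\<lambda>D. D - {x}) S"
  unfolding inj_on_def by (metis insert_Diff)

lemma inj_out: "(\<forall>D\<in>S. x \<notin> D) \<Longrightarrow> inj_on (\<lambda>D. D - {x}) S"
  unfolding inj_on_def by auto




lemma priv_mono: "priv V E D w x \<Longrightarrow> w \<in> V' \<Longrightarrow> D' \<subseteq> D \<Longrightarrow> priv V' E D' w x"
  by (auto simp: priv_def)

lemma final_le:
  assumes "finite V" "b \<in> V"
  shows "card {D. minimal_dominating_set V E D} \<le> card (st_safe V E b) + card (st_self V E b) + card (st_frag V E b) + card (st_ok V E b)"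
proof -
  have "{D. minimal_dominating_set V E D} \<subseteq> st_safe V E b \<union> st_self V E b \<union> st_frag V E b \<union> st_ok V E b"
  proof
    fix D assume "D \<in> {D. minimal_dominating_set V E D}"
    hence m: "D \<subseteq> V" "\<forall>v\<in>V. dm E D v" "\<forall>u\<in>D. \<exists>w. priv V E D w u" by (auto simp: mds_iff)
    hence p: "partial V E b D" by (auto simp: partial_def)
    show "D \<in> st_safe V E b \<union> st_self V E b \<union> st_frag V E b \<union> st_ok V E b"
    proof (cases "b \<in> D")
      case True
      then obtain w where w: "priv V E D w b" using m by blast
      show ?thesis
      proof (cases "\<exists>w. w \<noteq> b \<and> priv V E D w b")
        case True thus ?thesis using p \<open>b \<in> D\<close> by (simp add: st_safe_def)
      next
        case False hence "w = b" using w by blast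
        thus ?thesis using p \<open>b \<in> D\<close> False w by (simp add: st_self_def)
      qed
    next
      case False
      have "dm E D b" using m assms(2) by blast
      thus ?thesis using p False by (auto simp: st_frag_def st_ok_def)
    qed
  qed
  hence "card {D. minimal_dominating_set V E D} \<le> card (st_safe V E b \<union> st_self V E b \<union> st_frag V E b \<union> st_ok V E b)"
    using fin_sets[OF assms(1)] by (intro card_mono) auto
  also have "\<dots> \<le> card (st_safe V E b \<union> st_self V E b \<union> st_frag V E b) + card (st_ok V E b)" by (rule card_Un_le)
  also have "card (st_safe V E b \<union> st_self V E b \<union> st_frag V E b) \<le> card (st_safe V E b \<union> st_self V E b) + card (st_frag V E b)" by (rule card_Un_le)
  also have "card (st_safe V E b \<union> st_self V E b) \<le> card (st_safe V E b) + card (st_self V E b)" by (rule card_Un_le)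
  finally show ?thesis by simp
qed

section \<open>Removing an isolated vertex other than the boundary\<close>

locale isorem =
  fixes V E b x
  assumes sym: "\<forall>p q. E p q \<longrightarrow> E q p"
    and xV: "x \<in> V" and xb: "x \<noteq> b" and bV: "b \<in> V" and iso: "\<forall>w\<in>V. \<not> E x w"
begin

lemma noE: "w \<in> V \<Longrightarrow> \<not> E w x" using iso sym by blast

lemma in_all: "partial V E b D \<Longrightarrow> x \<in> D"
proof -
  assume p: "partial V E b D"
  hence "dm E D x" using xV xb by (simp add: partial_def)
  moreover have "D \<subseteq> V" using p by (simp add: partial_def)
  ultimately show "x \<in> D" using iso by (auto simp: dm_def)
qed

lemma priv_eq: "partial V E b D \<Longrightarrow> w \<noteq> x \<Longrightarrow> priv V E D w y \<longleftrightarrow> priv (V - {x}) E (D - {x}) w y"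
proof -
  assume p: "partial V E b D" and wx: "w \<noteq> x"
  show ?thesis
  proof
    assume "priv V E D w y" thus "priv (V - {x}) E (D - {x}) w y" using wx by (auto simp: priv_def)
  next
    assume a: "priv (V - {x}) E (D - {x}) w y"
    hence wV: "w \<in> V" by (simp add: priv_def)
    hence "\<not> E w x" using noE by blast
    thus "priv V E D w y" using a wx unfolding priv_def by blast
  qed
qed

lemma priv_x: "y \<in> V \<Longrightarrow> priv V E D x y \<Longrightarrow> y = x"
  using iso unfolding priv_def by blast

lemma dm_eq: "partial V E b D \<Longrightarrow> v \<in> V \<Longrightarrow> v \<noteq> x \<Longrightarrow> dm E D v \<longleftrightarrow> dm E (D - {x}) v"
  using noE unfolding dm_def by auto

lemma partial_eq: "partial V E b D \<Longrightarrow> partial (V - {x}) E b (D - {x})"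
proof -
  assume p: "partial V E b D"
  show ?thesis unfolding partial_def
  proof (intro conjI ballI impI)
    show "D - {x} \<subseteq> V - {x}" using p by (auto simp: partial_def)
  next
    fix v assume "v \<in> V - {x}" "v \<noteq> b" thus "dm E (D - {x}) v" using p dm_eq[OF p] by (auto simp: partial_def)
  next
    fix u assume u: "u \<in> D - {x}" "u \<noteq> b"
    then obtain w where w: "priv V E D w u" using p by (auto simp: partial_def)
    moreover have "u \<in> V" using u p by (auto simp: partial_def)
    ultimately have "w \<noteq> x" using priv_x u by blast
    thus "\<exists>w. priv (V - {x}) E (D - {x}) w u" using priv_eq[OF p] w by blast
  qed
qed

lemma ex_eq2:
  assumes p: "partial V E b D" and yx: "y \<noteq> x" and yV: "y \<in> V"
  shows "(\<exists>w. priv V E D w y) \<longleftrightarrow> (\<exists>w. priv (V - {x}) E (D - {x}) w y)"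
proof -
  show ?thesis
  proof
    assume "\<exists>w. priv V E D w y"
    then obtain w where w: "priv V E D w y" by blast
    have "w \<noteq> x" using priv_x[OF yV] w yx by blast
    thus "\<exists>w. priv (V - {x}) E (D - {x}) w y" using priv_eq[OF p] w by blast
  next
    assume "\<exists>w. priv (V - {x}) E (D - {x}) w y"
    then obtain w where w: "priv (V - {x}) E (D - {x}) w y" by blast
    have "w \<noteq> x" using w by (simp add: priv_def)
    thus "\<exists>w. priv V E D w y" using priv_eq[OF p] w by blast
  qed
qed

lemma ex_eq:
  assumes p: "partial V E b D" and yx: "y \<noteq> x" and yV: "y \<in> V"
  shows "(\<exists>w. w \<noteq> b \<and> priv V E D w y) \<longleftrightarrow> (\<exists>w. w \<noteq> b \<and> priv (V - {x}) E (D - {x}) w y)"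
proof -
  show ?thesis
  proof
    assume "\<exists>w. w \<noteq> b \<and> priv V E D w y"
    then obtain w where w: "w \<noteq> b" "priv V E D w y" by blast
    have "w \<noteq> x" using priv_x[OF yV] w yx by blast
    thus "\<exists>w. w \<noteq> b \<and> priv (V - {x}) E (D - {x}) w y" using priv_eq[OF p] w by blast
  next
    assume "\<exists>w. w \<noteq> b \<and> priv (V - {x}) E (D - {x}) w y"
    then obtain w where w: "w \<noteq> b" "priv (V - {x}) E (D - {x}) w y" by blast
    have "w \<noteq> x" using w by (simp add: priv_def)
    thus "\<exists>w. w \<noteq> b \<and> priv V E D w y" using priv_eq[OF p] w by blast
  qed
qed

lemma frag_eq: "partial V E b D \<Longrightarrow> isfrag V E b D \<longleftrightarrow> isfrag (V - {x}) E b (D - {x})"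
proof -
  assume p: "partial V E b D"
  have 1: "y \<noteq> x" if "priv V E D b y" for y
  proof
    assume "y = x"
    hence "b = x \<or> E b x" using that by (simp add: priv_def)
    thus False using xb noE bV by blast
  qed
  have DV: "D \<subseteq> V" using p by (simp add: partial_def)
  show ?thesis unfolding isfrag_def
  proof
    assume "\<exists>u\<in>D. priv V E D b u \<and> \<not> (\<exists>w. w \<noteq> b \<and> priv V E D w u)"
    then obtain u where u: "u \<in> D" "priv V E D b u" "\<not> (\<exists>w. w \<noteq> b \<and> priv V E D w u)" by blast
    have ux: "u \<noteq> x" using 1 u by blast
    have bx: "b \<noteq> x" using xb by simp
    have "priv (V - {x}) E (D - {x}) b u" using u(2) priv_eq[OF p bx] by simp
    moreover have "\<not> (\<exists>w. w \<noteq> b \<and> priv (V - {x}) E (D - {x}) w u)" using u(3) ex_eq[OF p ux] u(1) DV by blast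
    ultimately show "\<exists>u\<in>D - {x}. priv (V - {x}) E (D - {x}) b u \<and> \<not> (\<exists>w. w \<noteq> b \<and> priv (V - {x}) E (D - {x}) w u)"
      using u ux by blast
  next
    assume "\<exists>u\<in>D - {x}. priv (V - {x}) E (D - {x}) b u \<and> \<not> (\<exists>w. w \<noteq> b \<and> priv (V - {x}) E (D - {x}) w u)"
    then obtain u where u: "u \<in> D - {x}" "priv (V - {x}) E (D - {x}) b u" "\<not> (\<exists>w. w \<noteq> b \<and> priv (V - {x}) E (D - {x}) w u)" by blast
    have ux: "u \<noteq> x" using u by blast
    have bx: "b \<noteq> x" using xb by simp
    have "priv V E D b u" using u(2) priv_eq[OF p bx] by simp
    moreover have "\<not> (\<exists>w. w \<noteq> b \<and> priv V E D w u)" using u(3) ex_eq[OF p ux] u(1) DV by blast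
    ultimately show "\<exists>u\<in>D. priv V E D b u \<and> \<not> (\<exists>w. w \<noteq> b \<and> priv V E D w u)"
      using u by blast
  qed
qed

lemma all_eq:
  assumes p: "partial V E b D"
  shows "x \<in> D" "partial (V - {x}) E b (D - {x})" "b \<in> D \<longleftrightarrow> b \<in> D - {x}"
    "dm E D b \<longleftrightarrow> dm E (D - {x}) b"
    "(\<exists>w. w \<noteq> b \<and> priv V E D w b) \<longleftrightarrow> (\<exists>w. w \<noteq> b \<and> priv (V - {x}) E (D - {x}) w b)"
    "priv V E D b b \<longleftrightarrow> priv (V - {x}) E (D - {x}) b b"
    "(\<exists>w. priv V E D w b) \<longleftrightarrow> (\<exists>w. priv (V - {x}) E (D - {x}) w b)"
    "isfrag V E b D \<longleftrightarrow> isfrag (V - {x}) E b (D - {x})"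
proof -
  have bx: "b \<noteq> x" using xb by simp
  show "x \<in> D" by (rule in_all[OF p])
  show "partial (V - {x}) E b (D - {x})" by (rule partial_eq[OF p])
  show "b \<in> D \<longleftrightarrow> b \<in> D - {x}" using bx by simp
  show "dm E D b \<longleftrightarrow> dm E (D - {x}) b" using noE bx bV unfolding dm_def by blast
  show "(\<exists>w. w \<noteq> b \<and> priv V E D w b) \<longleftrightarrow> (\<exists>w. w \<noteq> b \<and> priv (V - {x}) E (D - {x}) w b)"
    by (rule ex_eq[OF p bx bV])
  show "priv V E D b b \<longleftrightarrow> priv (V - {x}) E (D - {x}) b b" by (rule priv_eq[OF p bx])
  show "(\<exists>w. priv V E D w b) \<longleftrightarrow> (\<exists>w. priv (V - {x}) E (D - {x}) w b)" by (rule ex_eq2[OF p bx bV])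
  show "isfrag V E b D \<longleftrightarrow> isfrag (V - {x}) E b (D - {x})" by (rule frag_eq[OF p])
qed

lemma trans_iso:
  assumes fin: "finite V"
  shows "card (st_safe V E b) \<le> card (st_safe (V - {x}) E b)"
    "card (st_self V E b) \<le> card (st_self (V - {x}) E b)"
    "card (st_none V E b) \<le> card (st_none (V - {x}) E b)"
    "card (st_undom V E b) \<le> card (st_undom (V - {x}) E b)"
    "card (st_frag V E b) \<le> card (st_frag (V - {x}) E b)"
    "card (st_ok V E b) \<le> card (st_ok (V - {x}) E b)"
proof -
  have fin': "finite (V - {x})" using fin by simp
  note F = fin_sets[OF fin']
  have P: "D \<in> S \<Longrightarrow> partial V E b D" if "S \<in> {st_safe V E b, st_self V E b, st_none V E b, st_undom V E b, st_frag V E b, st_ok V E b}" for S D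
    using that by (auto simp: st_safe_def st_self_def st_none_def st_undom_def st_frag_def st_ok_def)
  have I: "\<forall>D\<in>S. x \<in> D" if "S \<in> {st_safe V E b, st_self V E b, st_none V E b, st_undom V E b, st_frag V E b, st_ok V E b}" for S
    using P[OF that] all_eq(1) by blast
  have bx: "b \<noteq> x" using xb by simp
  show "card (st_safe V E b) \<le> card (st_safe (V - {x}) E b)"
  proof (rule card_map_le1[OF inj_in[OF I] _ F(1)])
    show "st_safe V E b \<in> {st_safe V E b, st_self V E b, st_none V E b, st_undom V E b, st_frag V E b, st_ok V E b}" by simp
    show "(\<lambda>D. D - {x}) ` st_safe V E b \<subseteq> st_safe (V - {x}) E b"
    proof (rule image_subsetI)
      fix D assume D: "D \<in> st_safe V E b"
      hence p: "partial V E b D" by (simp add: st_safe_def)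
      note q = all_eq(2,5)[OF p]
      show "D - {x} \<in> st_safe (V - {x}) E b" using D q bx unfolding st_safe_def mem_Collect_eq by blast
    qed
  qed
  show "card (st_self V E b) \<le> card (st_self (V - {x}) E b)"
  proof (rule card_map_le1[OF inj_in[OF I] _ F(2)])
    show "st_self V E b \<in> {st_safe V E b, st_self V E b, st_none V E b, st_undom V E b, st_frag V E b, st_ok V E b}" by simp
    show "(\<lambda>D. D - {x}) ` st_self V E b \<subseteq> st_self (V - {x}) E b"
    proof (rule image_subsetI)
      fix D assume D: "D \<in> st_self V E b"
      hence p: "partial V E b D" by (simp add: st_self_def)
      note q = all_eq(2,5,6)[OF p]
      show "D - {x} \<in> st_self (V - {x}) E b" using D q bx unfolding st_self_def mem_Collect_eq by blast
    qed
  qed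
  show "card (st_none V E b) \<le> card (st_none (V - {x}) E b)"
  proof (rule card_map_le1[OF inj_in[OF I] _ F(3)])
    show "st_none V E b \<in> {st_safe V E b, st_self V E b, st_none V E b, st_undom V E b, st_frag V E b, st_ok V E b}" by simp
    show "(\<lambda>D. D - {x}) ` st_none V E b \<subseteq> st_none (V - {x}) E b"
    proof (rule image_subsetI)
      fix D assume D: "D \<in> st_none V E b"
      hence p: "partial V E b D" by (simp add: st_none_def)
      note q = all_eq(2,7)[OF p]
      show "D - {x} \<in> st_none (V - {x}) E b" using D q bx unfolding st_none_def mem_Collect_eq by blast
    qed
  qed
  show "card (st_undom V E b) \<le> card (st_undom (V - {x}) E b)"
  proof (rule card_map_le1[OF inj_in[OF I] _ F(4)])
    show "st_undom V E b \<in> {st_safe V E b, st_self V E b, st_none V E b, st_undom V E b, st_frag V E b, st_ok V E b}" by simp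
    show "(\<lambda>D. D - {x}) ` st_undom V E b \<subseteq> st_undom (V - {x}) E b"
    proof (rule image_subsetI)
      fix D assume D: "D \<in> st_undom V E b"
      hence p: "partial V E b D" by (simp add: st_undom_def)
      note q = all_eq(2,4)[OF p]
      show "D - {x} \<in> st_undom (V - {x}) E b" using D q bx unfolding st_undom_def mem_Collect_eq by blast
    qed
  qed
  show "card (st_frag V E b) \<le> card (st_frag (V - {x}) E b)"
  proof (rule card_map_le1[OF inj_in[OF I] _ F(5)])
    show "st_frag V E b \<in> {st_safe V E b, st_self V E b, st_none V E b, st_undom V E b, st_frag V E b, st_ok V E b}" by simp
    show "(\<lambda>D. D - {x}) ` st_frag V E b \<subseteq> st_frag (V - {x}) E b"
    proof (rule image_subsetI)
      fix D assume D: "D \<in> st_frag V E b"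
      hence p: "partial V E b D" by (simp add: st_frag_def)
      note q = all_eq(2,4,8)[OF p]
      show "D - {x} \<in> st_frag (V - {x}) E b" using D q bx unfolding st_frag_def mem_Collect_eq by blast
    qed
  qed
  show "card (st_ok V E b) \<le> card (st_ok (V - {x}) E b)"
  proof (rule card_map_le1[OF inj_in[OF I] _ F(6)])
    show "st_ok V E b \<in> {st_safe V E b, st_self V E b, st_none V E b, st_undom V E b, st_frag V E b, st_ok V E b}" by simp
    show "(\<lambda>D. D - {x}) ` st_ok V E b \<subseteq> st_ok (V - {x}) E b"
    proof (rule image_subsetI)
      fix D assume D: "D \<in> st_ok V E b"
      hence p: "partial V E b D" by (simp add: st_ok_def)
      note q = all_eq(2,4,8)[OF p]
      show "D - {x} \<in> st_ok (V - {x}) E b" using D q bx unfolding st_ok_def mem_Collect_eq by blast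
    qed
  qed
qed

end






locale leafrem =
  fixes V E b l
  assumes sym: "\<forall>p q. E p q \<longrightarrow> E q p"
    and bV: "b \<in> V" and lV: "l \<in> V" and lb: "l \<noteq> b" and Elb: "E l b"
    and leaf: "\<forall>w\<in>V. E l w \<longrightarrow> w = b"
begin

lemma Ebl: "E b l" using Elb sym by blast

lemma leafr: "w \<in> V \<Longrightarrow> E w l \<Longrightarrow> w = b" using leaf sym by blast

lemma F1: assumes p: "partial V E b D" and bD: "b \<in> D" shows "l \<notin> D"
proof
  assume lD: "l \<in> D"
  then obtain w where w: "priv V E D w l" using p lb by (auto simp: partial_def)
  hence wV: "w \<in> V" and wl: "w = l \<or> E w l" and un: "\<forall>u'\<in>D. (w = u' \<or> E w u') \<longrightarrow> u' = l"
    by (auto simp: priv_def)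
  show False
  proof (cases "w = l")
    case True thus False using un bD Elb lb by blast
  next
    case False hence "w = b" using wl leafr wV by blast
    thus False using un bD lb by blast
  qed
qed

lemma F2: assumes p: "partial V E b D" and bD: "b \<in> D" shows "priv V E D l b"
proof -
  have lD: "l \<notin> D" using F1[OF p bD] .
  have DV: "D \<subseteq> V" using p by (simp add: partial_def)
  show ?thesis unfolding priv_def using lV Elb lD DV leaf by blast
qed

lemma lin: assumes p: "partial V E b D" and bD: "b \<notin> D" shows "l \<in> D"
proof -
  have "dm E D l" using p lV lb by (simp add: partial_def)
  moreover have DV: "D \<subseteq> V" using p by (simp add: partial_def)
  ultimately show ?thesis using leaf bD unfolding dm_def by blast
qed

lemma safe_sub: "st_safe V E b \<subseteq> st_safe (V - {l}) E b \<union> st_self (V - {l}) E b \<union> st_none (V - {l}) E b"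
proof
  fix D assume D: "D \<in> st_safe V E b"
  hence p: "partial V E b D" and bD: "b \<in> D" by (auto simp: st_safe_def)
  have lD: "l \<notin> D" using F1[OF p bD] .
  have DV: "D \<subseteq> V" using p by (simp add: partial_def)
  have p': "partial (V - {l}) E b D" unfolding partial_def
  proof (intro conjI ballI impI)
    show "D \<subseteq> V - {l}" using DV lD by blast
  next
    fix v assume "v \<in> V - {l}" "v \<noteq> b" thus "dm E D v" using p by (simp add: partial_def)
  next
    fix u assume u: "u \<in> D" "u \<noteq> b"
    then obtain w where w: "priv V E D w u" using p by (auto simp: partial_def)
    have "w \<noteq> l"
    proof
      assume "w = l"
      hence "l = u \<or> E l u" using w by (simp add: priv_def)
      moreover have "u \<in> V" using u DV by blast
      ultimately have "E l u" "u \<in> V" using lD u(1) by auto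
      hence "u = b" using leaf by blast
      thus False using u(2) by simp
    qed
    hence wV': "w \<in> V - {l}" using w by (simp add: priv_def)
    have "priv (V - {l}) E D w u" by (rule priv_mono[OF w wV' subset_refl])
    thus "\<exists>w. priv (V - {l}) E D w u" by blast
  qed
  show "D \<in> st_safe (V - {l}) E b \<union> st_self (V - {l}) E b \<union> st_none (V - {l}) E b"
  proof (cases "\<exists>w. w \<noteq> b \<and> priv (V - {l}) E D w b")
    case True thus ?thesis using p' bD unfolding st_safe_def by blast
  next
    case False
    show ?thesis
    proof (cases "priv (V - {l}) E D b b")
      case True thus ?thesis using p' bD False unfolding st_self_def by blast
    next
      case False2: False
      have "\<not> (\<exists>w. priv (V - {l}) E D w b)" using False False2 by auto
      thus ?thesis using p' bD unfolding st_none_def by blast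
    qed
  qed
qed

lemma self_empty: "st_self V E b = {}"
  using F2 unfolding st_self_def using lb by blast

lemma none_empty: "st_none V E b = {}"
  using F2 unfolding st_none_def by blast

lemma undom_empty: "st_undom V E b = {}"
proof -
  have False if p: "partial V E b D" and bD: "b \<notin> D" and nd: "\<not> dm E D b" for D
  proof -
    have "l \<in> D" using lin[OF p bD] .
    thus False using nd Ebl unfolding dm_def by blast
  qed
  thus ?thesis unfolding st_undom_def by blast
qed

lemma frag_empty: "st_frag V E b = {}"
proof -
  have False if p: "partial V E b D" and bD: "b \<notin> D" and fr: "isfrag V E b D" for D
  proof -
    have lD: "l \<in> D" using lin[OF p bD] .
    have DV: "D \<subseteq> V" using p by (simp add: partial_def)
    obtain u where u: "u \<in> D" "priv V E D b u" "\<not> (\<exists>w. w \<noteq> b \<and> priv V E D w u)"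
      using fr unfolding isfrag_def by blast
    have "l = u" using u(2) lD Ebl unfolding priv_def by blast
    moreover have "priv V E D l l" unfolding priv_def using lV lD leaf DV bD by blast
    ultimately show False using u(3) lb by blast
  qed
  thus ?thesis unfolding st_frag_def by blast
qed

lemma ok_map: "(\<lambda>D. D - {l}) ` st_ok V E b \<subseteq> st_undom (V - {l}) E b \<union> st_ok (V - {l}) E b"
proof (rule image_subsetI)
  fix D assume D: "D \<in> st_ok V E b"
  hence p: "partial V E b D" and bD: "b \<notin> D" and nf: "\<not> isfrag V E b D" by (auto simp: st_ok_def)
  have lD: "l \<in> D" using lin[OF p bD] .
  have DV: "D \<subseteq> V" using p by (simp add: partial_def)
  have wl: "w \<noteq> l" if "priv V E D w u" "u \<in> D - {l}" for w u
  proof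
    assume "w = l"
    thus False using that lD unfolding priv_def by blast
  qed
  have p': "partial (V - {l}) E b (D - {l})" unfolding partial_def
  proof (intro conjI ballI impI)
    show "D - {l} \<subseteq> V - {l}" using DV by blast
  next
    fix v assume v: "v \<in> V - {l}" "v \<noteq> b"
    hence "dm E D v" using p by (simp add: partial_def)
    moreover have "\<not> E v l" using leafr v by blast
    ultimately show "dm E (D - {l}) v" using v unfolding dm_def by blast
  next
    fix u assume u: "u \<in> D - {l}" "u \<noteq> b"
    then obtain w where w: "priv V E D w u" using p by (auto simp: partial_def)
    have wV': "w \<in> V - {l}" using w wl[OF w u(1)] by (simp add: priv_def)
    have "priv (V - {l}) E (D - {l}) w u" by (rule priv_mono[OF w wV']) blast
    thus "\<exists>w. priv (V - {l}) E (D - {l}) w u" by blast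
  qed
  have nf': "\<not> isfrag (V - {l}) E b (D - {l})"
  proof
    assume "isfrag (V - {l}) E b (D - {l})"
    then obtain u where u: "u \<in> D - {l}" "\<not> (\<exists>w. w \<noteq> b \<and> priv (V - {l}) E (D - {l}) w u)"
      unfolding isfrag_def by blast
    have "u \<noteq> b" using u bD by blast
    then obtain w where w: "priv V E D w u" using p u by (auto simp: partial_def)
    have wb: "w \<noteq> b"
    proof
      assume "w = b"
      hence "l = u" using w lD Ebl unfolding priv_def by blast
      thus False using u by blast
    qed
    have wV': "w \<in> V - {l}" using w wl[OF w u(1)] by (simp add: priv_def)
    have "priv (V - {l}) E (D - {l}) w u" by (rule priv_mono[OF w wV']) blast
    thus False using u(2) wb by blast
  qed
  show "D - {l} \<in> st_undom (V - {l}) E b \<union> st_ok (V - {l}) E b"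
    using p' bD nf' unfolding st_undom_def st_ok_def by blast
qed

lemma trans_leaf:
  assumes fin: "finite V"
  shows "card (st_safe V E b) \<le> card (st_safe (V - {l}) E b) + card (st_self (V - {l}) E b) + card (st_none (V - {l}) E b)"
    "card (st_self V E b) = 0" "card (st_none V E b) = 0" "card (st_undom V E b) = 0" "card (st_frag V E b) = 0"
    "card (st_ok V E b) \<le> card (st_undom (V - {l}) E b) + card (st_ok (V - {l}) E b)"
proof -
  have fin': "finite (V - {l})" using fin by simp
  note F = fin_sets[OF fin']
  show "card (st_safe V E b) \<le> card (st_safe (V - {l}) E b) + card (st_self (V - {l}) E b) + card (st_none (V - {l}) E b)"
    by (rule card_map_le3[where g=id, OF _ _ F(1,2,3)]) (use safe_sub in auto)
  show "card (st_self V E b) = 0" "card (st_none V E b) = 0" "card (st_undom V E b) = 0" "card (st_frag V E b) = 0"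
    by (simp_all add: self_empty none_empty undom_empty frag_empty)
  have "\<forall>D\<in>st_ok V E b. l \<in> D" using lin unfolding st_ok_def by blast
  thus "card (st_ok V E b) \<le> card (st_undom (V - {l}) E b) + card (st_ok (V - {l}) E b)"
    by (rule card_map_le2[OF inj_in ok_map F(4,6)])
qed

end





locale nbrrem =
  fixes V E v c
  assumes sym: "\<forall>p q. E p q \<longrightarrow> E q p"
    and vV: "v \<in> V" and cV: "c \<in> V" and vc: "v \<noteq> c" and Evc: "E v c"
    and only: "\<forall>w\<in>V. E v w \<longrightarrow> w = c"
begin

lemma Ecv: "E c v" using Evc sym by blast

lemma onlyr: "w \<in> V \<Longrightarrow> E w v \<Longrightarrow> w = c" using only sym by blast

lemma pv_ne: assumes "priv V E D v u" "u \<in> V" shows "u = v \<or> u = c"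
  using assms only unfolding priv_def by blast

lemma common:
  assumes p: "partial V E v D"
  shows "partial (V - {v}) E c (D - {v})"
  unfolding partial_def
proof (intro conjI ballI impI)
  have DV: "D \<subseteq> V" using p by (simp add: partial_def)
  show "D - {v} \<subseteq> V - {v}" using DV by blast
next
  fix x assume x: "x \<in> V - {v}" "x \<noteq> c"
  hence "dm E D x" using p by (simp add: partial_def)
  moreover have "\<not> E x v" using onlyr x by blast
  ultimately show "dm E (D - {v}) x" using x unfolding dm_def by blast
next
  fix u assume u: "u \<in> D - {v}" "u \<noteq> c"
  have DV: "D \<subseteq> V" using p by (simp add: partial_def)
  obtain w where w: "priv V E D w u" using p u by (auto simp: partial_def)
  have "w \<noteq> v"
  proof
    assume "w = v"
    hence "u = v \<or> u = c" using pv_ne w u DV by blast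
    thus False using u by blast
  qed
  hence wV': "w \<in> V - {v}" using w by (simp add: priv_def)
  have "priv (V - {v}) E (D - {v}) w u" by (rule priv_mono[OF w wV']) blast
  thus "\<exists>w. priv (V - {v}) E (D - {v}) w u" by blast
qed

lemma DV: "partial V E v D \<Longrightarrow> D \<subseteq> V" by (simp add: partial_def)

lemma safe_map: "(\<lambda>D. D - {v}) ` st_safe V E v \<subseteq> st_undom (V - {v}) E c"
proof (rule image_subsetI)
  fix D assume D: "D \<in> st_safe V E v"
  hence p: "partial V E v D" and vD: "v \<in> D" and ex: "\<exists>w. w \<noteq> v \<and> priv V E D w v" by (auto simp: st_safe_def)
  obtain w where w: "w \<noteq> v" "priv V E D w v" using ex by blast
  have wV: "w \<in> V" and "w = v \<or> E w v" using w by (auto simp: priv_def)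
  hence "w = c" using onlyr w(1) by blast
  hence pc: "\<forall>u'\<in>D. (c = u' \<or> E c u') \<longrightarrow> u' = v" using w(2) by (simp add: priv_def)
  have cD: "c \<notin> D - {v}" using pc vc by blast
  have "\<not> dm E (D - {v}) c" using pc cD unfolding dm_def by blast
  thus "D - {v} \<in> st_undom (V - {v}) E c" using common[OF p] cD unfolding st_undom_def by blast
qed

lemma self_map: "(\<lambda>D. D - {v}) ` st_self V E v \<subseteq> st_ok (V - {v}) E c"
proof (rule image_subsetI)
  fix D assume D: "D \<in> st_self V E v"
  hence p: "partial V E v D" and vD: "v \<in> D" and nex: "\<not> (\<exists>w. w \<noteq> v \<and> priv V E D w v)"
    and pvv: "priv V E D v v" by (auto simp: st_self_def)
  have cD: "c \<notin> D" using pvv Evc vc unfolding priv_def by blast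
  have "\<not> priv V E D c v" using nex vc by auto
  then obtain u' where u': "u' \<in> D" "c = u' \<or> E c u'" "u' \<noteq> v" using cV Ecv unfolding priv_def by blast
  have dmc: "dm E (D - {v}) c" using u' cD unfolding dm_def by blast
  have nf: "\<not> isfrag (V - {v}) E c (D - {v})"
  proof
    assume "isfrag (V - {v}) E c (D - {v})"
    then obtain u where u: "u \<in> D - {v}" "\<not> (\<exists>w. w \<noteq> c \<and> priv (V - {v}) E (D - {v}) w u)"
      unfolding isfrag_def by blast
    have uV: "u \<in> V" using u DV[OF p] by blast
    obtain w where w: "priv V E D w u" using p u by (auto simp: partial_def)
    have wv: "w \<noteq> v"
    proof
      assume "w = v"
      hence "u = v \<or> u = c" using pv_ne w uV by blast
      thus False using u cD by blast
    qed
    have wc: "w \<noteq> c"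
    proof
      assume "w = c"
      hence "\<forall>u'\<in>D. (c = u' \<or> E c u') \<longrightarrow> u' = u" using w by (simp add: priv_def)
      hence "v = u" using vD Ecv by blast
      thus False using u by blast
    qed
    have wV': "w \<in> V - {v}" using w wv by (simp add: priv_def)
    have "priv (V - {v}) E (D - {v}) w u" by (rule priv_mono[OF w wV']) blast
    thus False using u(2) wc by blast
  qed
  show "D - {v} \<in> st_ok (V - {v}) E c" using common[OF p] cD dmc nf unfolding st_ok_def by blast
qed

lemma none_map: "(\<lambda>D. D - {v}) ` st_none V E v \<subseteq> st_safe (V - {v}) E c"
proof (rule image_subsetI)
  fix D assume D: "D \<in> st_none V E v"
  hence p: "partial V E v D" and vD: "v \<in> D" and nex: "\<not> (\<exists>w. priv V E D w v)" by (auto simp: st_none_def)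
  have cD: "c \<in> D"
  proof (rule ccontr)
    assume "c \<notin> D"
    hence "priv V E D v v" using vV only DV[OF p] unfolding priv_def by blast
    thus False using nex by blast
  qed
  obtain w where w: "priv V E D w c" using p cD vc by (auto simp: partial_def)
  have wv: "w \<noteq> v"
  proof
    assume "w = v" thus False using w vD vc unfolding priv_def by blast
  qed
  have wc: "w \<noteq> c"
  proof
    assume "w = c" thus False using w vD Ecv vc unfolding priv_def by blast
  qed
  have wV': "w \<in> V - {v}" using w wv by (simp add: priv_def)
  have "priv (V - {v}) E (D - {v}) w c" by (rule priv_mono[OF w wV']) blast
  thus "D - {v} \<in> st_safe (V - {v}) E c" using common[OF p] cD vc wc unfolding st_safe_def by blast
qed

lemma undom_sub: "st_undom V E v \<subseteq> st_frag (V - {v}) E c \<union> st_ok (V - {v}) E c"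
proof
  fix D assume D: "D \<in> st_undom V E v"
  hence p: "partial V E v D" and vD: "v \<notin> D" and nd: "\<not> dm E D v" by (auto simp: st_undom_def)
  have cD: "c \<notin> D" using nd Evc unfolding dm_def by blast
  have dmc: "dm E D c" using p cV vc by (simp add: partial_def)
  have "D - {v} = D" using vD by simp
  hence p': "partial (V - {v}) E c D" using common[OF p] by simp
  show "D \<in> st_frag (V - {v}) E c \<union> st_ok (V - {v}) E c"
    using p' cD dmc unfolding st_frag_def st_ok_def by blast
qed

lemma frag_sub: "st_frag V E v \<subseteq> st_none (V - {v}) E c"
proof
  fix D assume D: "D \<in> st_frag V E v"
  hence p: "partial V E v D" and vD: "v \<notin> D" and dmv: "dm E D v" and fr: "isfrag V E v D"
    by (auto simp: st_frag_def)
  have cD: "c \<in> D" using dmv vD only DV[OF p] unfolding dm_def by blast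
  obtain u where u: "u \<in> D" "priv V E D v u" "\<not> (\<exists>w. w \<noteq> v \<and> priv V E D w u)"
    using fr unfolding isfrag_def by blast
  have "u = v \<or> u = c" using pv_ne u DV[OF p] by blast
  hence uc: "u = c" using u vD by blast
  have "D - {v} = D" using vD by simp
  hence p': "partial (V - {v}) E c D" using common[OF p] by simp
  have "\<not> (\<exists>w. priv (V - {v}) E D w c)"
  proof
    assume "\<exists>w. priv (V - {v}) E D w c"
    then obtain w where w: "priv (V - {v}) E D w c" by blast
    hence wv: "w \<noteq> v" and wV: "w \<in> V" by (auto simp: priv_def)
    have "priv V E D w c" by (rule priv_mono[OF w wV subset_refl])
    thus False using u(3) uc wv by blast
  qed
  thus "D \<in> st_none (V - {v}) E c" using p' cD unfolding st_none_def by blast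
qed

lemma ok_sub: "st_ok V E v \<subseteq> st_safe (V - {v}) E c \<union> st_self (V - {v}) E c"
proof
  fix D assume D: "D \<in> st_ok V E v"
  hence p: "partial V E v D" and vD: "v \<notin> D" and dmv: "dm E D v" and nf: "\<not> isfrag V E v D"
    by (auto simp: st_ok_def)
  have cD: "c \<in> D" using dmv vD only DV[OF p] unfolding dm_def by blast
  have pvc: "priv V E D v c" using vV Evc vD only DV[OF p] unfolding priv_def by blast
  then obtain w where w: "w \<noteq> v" "priv V E D w c" using nf cD unfolding isfrag_def by blast
  have wV': "w \<in> V - {v}" using w by (simp add: priv_def)
  have pw: "priv (V - {v}) E D w c" by (rule priv_mono[OF w(2) wV' subset_refl])
  have "D - {v} = D" using vD by simp
  hence p': "partial (V - {v}) E c D" using common[OF p] by simp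
  show "D \<in> st_safe (V - {v}) E c \<union> st_self (V - {v}) E c"
  proof (cases "\<exists>w. w \<noteq> c \<and> priv (V - {v}) E D w c")
    case True thus ?thesis using p' cD unfolding st_safe_def by blast
  next
    case False
    hence "w = c" using pw by blast
    hence "priv (V - {v}) E D c c" using pw by simp
    thus ?thesis using p' cD False unfolding st_self_def by blast
  qed
qed

lemma trans_nbr:
  assumes fin: "finite V"
  shows "card (st_safe V E v) \<le> card (st_undom (V - {v}) E c)"
    "card (st_self V E v) \<le> card (st_ok (V - {v}) E c)"
    "card (st_none V E v) \<le> card (st_safe (V - {v}) E c)"
    "card (st_undom V E v) \<le> card (st_frag (V - {v}) E c) + card (st_ok (V - {v}) E c)"
    "card (st_frag V E v) \<le> card (st_none (V - {v}) E c)"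
    "card (st_ok V E v) \<le> card (st_safe (V - {v}) E c) + card (st_self (V - {v}) E c)"
proof -
  have fin': "finite (V - {v})" using fin by simp
  note F = fin_sets[OF fin']
  have i1: "\<forall>D\<in>st_safe V E v. v \<in> D" "\<forall>D\<in>st_self V E v. v \<in> D" "\<forall>D\<in>st_none V E v. v \<in> D"
    by (auto simp: st_safe_def st_self_def st_none_def)
  show "card (st_safe V E v) \<le> card (st_undom (V - {v}) E c)"
    by (rule card_map_le1[OF inj_in[OF i1(1)] safe_map F(4)])
  show "card (st_self V E v) \<le> card (st_ok (V - {v}) E c)"
    by (rule card_map_le1[OF inj_in[OF i1(2)] self_map F(6)])
  show "card (st_none V E v) \<le> card (st_safe (V - {v}) E c)"
    by (rule card_map_le1[OF inj_in[OF i1(3)] none_map F(1)])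
  show "card (st_undom V E v) \<le> card (st_frag (V - {v}) E c) + card (st_ok (V - {v}) E c)"
    by (rule card_map_le2[where g=id, OF _ _ F(5,6)]) (use undom_sub in auto)
  show "card (st_frag V E v) \<le> card (st_none (V - {v}) E c)"
    by (rule card_map_le1[where g=id, OF _ _ F(3)]) (use frag_sub in auto)
  show "card (st_ok V E v) \<le> card (st_safe (V - {v}) E c) + card (st_self (V - {v}) E c)"
    by (rule card_map_le2[where g=id, OF _ _ F(1,2)]) (use ok_sub in auto)
qed

end





locale isob =
  fixes V E b
  assumes sym: "\<forall>p q. E p q \<longrightarrow> E q p"
    and bV: "b \<in> V" and iso: "\<forall>w\<in>V. \<not> E b w"
begin

lemma isor: "w \<in> V \<Longrightarrow> \<not> E w b" using iso sym by blast

lemma to_mds: assumes p: "partial V E b D" shows "minimal_dominating_set (V - {b}) E (D - {b})"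
  unfolding mds_iff
proof (intro conjI ballI)
  have DV: "D \<subseteq> V" using p by (simp add: partial_def)
  show "D - {b} \<subseteq> V - {b}" using DV by blast
next
  fix x assume x: "x \<in> V - {b}"
  hence "dm E D x" using p by (simp add: partial_def)
  moreover have "\<not> E x b" using isor x by blast
  ultimately show "dm E (D - {b}) x" using x unfolding dm_def by blast
next
  fix u assume u: "u \<in> D - {b}"
  have DV: "D \<subseteq> V" using p by (simp add: partial_def)
  obtain w where w: "priv V E D w u" using p u by (auto simp: partial_def)
  have "w \<noteq> b"
  proof
    assume "w = b"
    hence "b = u \<or> E b u" using w by (simp add: priv_def)
    thus False using u iso DV by blast
  qed
  hence wV': "w \<in> V - {b}" using w by (simp add: priv_def)
  have "priv (V - {b}) E (D - {b}) w u" by (rule priv_mono[OF w wV']) blast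
  thus "\<exists>w. priv (V - {b}) E (D - {b}) w u" by blast
qed

lemma trans_isob:
  assumes fin: "finite V"
  shows "card (st_safe V E b) = 0" "card (st_none V E b) = 0" "card (st_frag V E b) = 0" "card (st_ok V E b) = 0"
    "card (st_self V E b) \<le> card {D. minimal_dominating_set (V - {b}) E D}"
    "card (st_undom V E b) \<le> card {D. minimal_dominating_set (V - {b}) E D}"
proof -
  have fin': "finite (V - {b})" using fin by simp
  note F = fin_sets[OF fin']
  have "st_safe V E b = {}"
  proof -
    have False if "priv V E D w b" "w \<noteq> b" for D w
      using that isor unfolding priv_def by blast
    thus ?thesis unfolding st_safe_def by blast
  qed
  thus "card (st_safe V E b) = 0" by simp
  have "st_none V E b = {}"
  proof -
    have "priv V E D b b" if "partial V E b D" for D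
      using that bV iso unfolding priv_def partial_def by blast
    thus ?thesis unfolding st_none_def by blast
  qed
  thus "card (st_none V E b) = 0" by simp
  have nd: "\<not> dm E D b" if "partial V E b D" "b \<notin> D" for D
    using that iso unfolding dm_def partial_def by blast
  have "st_frag V E b = {}" "st_ok V E b = {}" using nd unfolding st_frag_def st_ok_def by blast+
  thus "card (st_frag V E b) = 0" "card (st_ok V E b) = 0" by simp_all
  have i1: "\<forall>D\<in>st_self V E b. b \<in> D" "\<forall>D\<in>st_undom V E b. b \<notin> D" by (auto simp: st_self_def st_undom_def)
  show "card (st_self V E b) \<le> card {D. minimal_dominating_set (V - {b}) E D}"
    by (rule card_map_le1[OF inj_in[OF i1(1)] _ F(7)]) (use to_mds in \<open>auto simp: st_self_def\<close>)
  show "card (st_undom V E b) \<le> card {D. minimal_dominating_set (V - {b}) E D}"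
  proof (rule card_map_le1[OF inj_out[OF i1(2)] _ F(7)], rule image_subsetI)
    fix D assume "D \<in> st_undom V E b"
    hence "partial V E b D" "b \<notin> D" by (auto simp: st_undom_def)
    thus "D - {b} \<in> {D. minimal_dominating_set (V - {b}) E D}" using to_mds by blast
  qed
qed

end



definition dec1 :: "'a set \<Rightarrow> ('a \<Rightarrow> 'a \<Rightarrow> bool) \<Rightarrow> 'a set list \<Rightarrow> bool" where
  "dec1 V E Bs \<longleftrightarrow> (\<forall>B\<in>set Bs. B \<subseteq> V \<and> card B \<le> 2) \<and> (\<forall>v\<in>V. \<exists>B\<in>set Bs. v \<in> B)
     \<and> (\<forall>u\<in>V. \<forall>w\<in>V. E u w \<longrightarrow> (\<exists>B\<in>set Bs. u \<in> B \<and> w \<in> B))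
     \<and> (\<forall>x i j k. i \<le> j \<and> j \<le> k \<and> k < length Bs \<and> x \<in> Bs ! i \<and> x \<in> Bs ! k \<longrightarrow> x \<in> Bs ! j)"

definition endv :: "'a set \<Rightarrow> ('a \<Rightarrow> 'a \<Rightarrow> bool) \<Rightarrow> 'a \<Rightarrow> bool" where
  "endv V E b \<longleftrightarrow> b \<in> V \<and> (\<exists>Bs k. dec1 V E Bs \<and> k < length Bs \<and> b \<in> Bs ! k \<and> (\<forall>i<k. Bs ! i \<subseteq> {b}))"

lemma dec1_rem:
  assumes fin: "finite V" and d: "dec1 V E Bs"
  shows "dec1 (V - R) E (map (\<lambda>B. B - R) Bs)"
  unfolding dec1_def
proof (intro conjI ballI allI impI)
  fix B' assume "B' \<in> set (map (\<lambda>B. B - R) Bs)"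
  then obtain B where B: "B \<in> set Bs" "B' = B - R" by auto
  have "B \<subseteq> V" "card B \<le> 2" using d B(1) by (auto simp: dec1_def)
  moreover have "finite B" using \<open>B \<subseteq> V\<close> fin finite_subset by blast
  moreover have "card (B - R) \<le> card B" by (rule card_mono[OF \<open>finite B\<close>]) blast
  ultimately show "B' \<subseteq> V - R" "card B' \<le> 2" using B(2) by auto
next
  fix v assume "v \<in> V - R"
  then obtain B where "B \<in> set Bs" "v \<in> B" using d by (auto simp: dec1_def)
  thus "\<exists>B\<in>set (map (\<lambda>B. B - R) Bs). v \<in> B" using \<open>v \<in> V - R\<close> by auto
next
  fix u w assume "u \<in> V - R" "w \<in> V - R" "E u w"
  then obtain B where "B \<in> set Bs" "u \<in> B" "w \<in> B" using d unfolding dec1_def by blast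
  thus "\<exists>B\<in>set (map (\<lambda>B. B - R) Bs). u \<in> B \<and> w \<in> B" using \<open>u \<in> V - R\<close> \<open>w \<in> V - R\<close> by auto
next
  fix x i j k assume a: "i \<le> j \<and> j \<le> k \<and> k < length (map (\<lambda>B. B - R) Bs) \<and> x \<in> map (\<lambda>B. B - R) Bs ! i \<and> x \<in> map (\<lambda>B. B - R) Bs ! k"
  have intv: "\<And>x i j k. i \<le> j \<Longrightarrow> j \<le> k \<Longrightarrow> k < length Bs \<Longrightarrow> x \<in> Bs ! i \<Longrightarrow> x \<in> Bs ! k \<Longrightarrow> x \<in> Bs ! j"
    using d unfolding dec1_def by blast
  have kl: "k < length Bs" using a by simp
  have jl: "j < length Bs" using a by simp
  have il: "i < length Bs" using a by simp
  have xi: "x \<in> Bs ! i" "x \<notin> R" using a il by auto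
  have xk: "x \<in> Bs ! k" using a kl by auto
  have "x \<in> Bs ! j" using intv[of i j k x] a kl xi xk by blast
  thus "x \<in> map (\<lambda>B. B - R) Bs ! j" using jl xi by simp
qed

lemma endv_rem:
  assumes fin: "finite V" and e: "endv V E b" and xb: "x \<noteq> b"
  shows "endv (V - {x}) E b"
proof -
  obtain Bs k where d: "dec1 V E Bs" and k: "k < length Bs" "b \<in> Bs ! k" "\<forall>i<k. Bs ! i \<subseteq> {b}"
    using e unfolding endv_def by blast
  have "dec1 (V - {x}) E (map (\<lambda>B. B - {x}) Bs)" by (rule dec1_rem[OF fin d])
  moreover have "b \<in> V - {x}" using e xb by (simp add: endv_def)
  ultimately show ?thesis unfolding endv_def using k xb
    by (intro conjI exI[of _ "map (\<lambda>B. B - {x}) Bs"] exI[of _ k]) auto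
qed

lemma endv_dec: "finite V \<Longrightarrow> endv V E b \<Longrightarrow> \<exists>Bs. dec1 (V - {b}) E Bs"
  unfolding endv_def using dec1_rem by blast

lemma end_exists:
  assumes fin: "finite V" and d: "dec1 V E Bs" and ne: "V \<noteq> {}"
  shows "\<exists>b. endv V E b"
proof -
  obtain v where v: "v \<in> V" using ne by blast
  then obtain B where B: "B \<in> set Bs" "v \<in> B" using d by (auto simp: dec1_def)
  then obtain i where i: "i < length Bs" "Bs ! i = B" by (auto simp: in_set_conv_nth)
  define k where "k = (LEAST i. i < length Bs \<and> Bs ! i \<noteq> {})"
  have ex: "i < length Bs \<and> Bs ! i \<noteq> {}" using i B by auto
  have k1: "k < length Bs \<and> Bs ! k \<noteq> {}" unfolding k_def by (rule LeastI[where P="\<lambda>i. i < length Bs \<and> Bs ! i \<noteq> {}", OF ex])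
  have k2: "\<forall>j<k. Bs ! j = {}"
  proof (intro allI impI)
    fix j assume "j < k"
    hence "\<not> (j < length Bs \<and> Bs ! j \<noteq> {})" unfolding k_def by (rule not_less_Least)
    thus "Bs ! j = {}" using \<open>j < k\<close> k1 by auto
  qed
  obtain b where b: "b \<in> Bs ! k" using k1 by blast
  have "b \<in> V" using d b k1 unfolding dec1_def by (meson nth_mem subsetD)
  thus ?thesis unfolding endv_def using d k1 b k2 by blast
qed

lemma three:
  assumes fin: "finite V" and d: "dec1 V E Bs" and i: "i < length Bs"
    and xyz: "x \<in> Bs ! i" "y \<in> Bs ! i" "z \<in> Bs ! i" "x \<noteq> y" "x \<noteq> z" "y \<noteq> z"
  shows False
proof -
  have "Bs ! i \<in> set Bs" using i by simp
  hence s: "Bs ! i \<subseteq> V" "card (Bs ! i) \<le> 2" using d by (auto simp: dec1_def)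
  have "finite (Bs ! i)" using s(1) fin finite_subset by blast
  hence "card {x, y, z} \<le> card (Bs ! i)" using xyz by (intro card_mono) auto
  moreover have "card {x, y, z} = 3" using xyz by auto
  ultimately show False using s(2) by simp
qed

lemma struct:
  assumes fin: "finite V" and irr: "\<forall>x. \<not> E x x" and sym: "\<forall>p q. E p q \<longrightarrow> E q p"
    and e: "endv V E b"
  shows "(\<exists>u\<in>V. u \<noteq> b \<and> (\<forall>w\<in>V. \<not> E u w))
    \<or> (\<exists>l\<in>V. l \<noteq> b \<and> E l b \<and> (\<forall>w\<in>V. E l w \<longrightarrow> w = b))
    \<or> (\<forall>w\<in>V. \<not> E b w)
    \<or> (\<exists>c\<in>V. c \<noteq> b \<and> E b c \<and> (\<forall>w\<in>V. E b w \<longrightarrow> w = c) \<and> endv (V - {b}) E c)"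
proof -
  { assume n1: "\<not> (\<exists>u\<in>V. u \<noteq> b \<and> (\<forall>w\<in>V. \<not> E u w))"
      and n2: "\<not> (\<exists>l\<in>V. l \<noteq> b \<and> E l b \<and> (\<forall>w\<in>V. E l w \<longrightarrow> w = b))"
      and n3: "\<not> (\<forall>w\<in>V. \<not> E b w)"
    have bV: "b \<in> V" using e by (simp add: endv_def)
    obtain Bs k where d: "dec1 V E Bs" and k: "k < length Bs" "b \<in> Bs ! k" "\<forall>i<k. Bs ! i \<subseteq> {b}"
      using e unfolding endv_def by blast
    have intv: "\<And>x i j k. i \<le> j \<Longrightarrow> j \<le> k \<Longrightarrow> k < length Bs \<Longrightarrow> x \<in> Bs ! i \<Longrightarrow> x \<in> Bs ! k \<Longrightarrow> x \<in> Bs ! j"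
      using d unfolding dec1_def by blast
    have edge: "\<And>u w. u \<in> V \<Longrightarrow> w \<in> V \<Longrightarrow> E u w \<Longrightarrow> \<exists>i<length Bs. u \<in> Bs ! i \<and> w \<in> Bs ! i"
      using d unfolding dec1_def by (metis in_set_conv_nth)
    have bagV: "\<And>i u. i < length Bs \<Longrightarrow> u \<in> Bs ! i \<Longrightarrow> u \<in> V"
      using d unfolding dec1_def by (meson nth_mem subsetD)
    define S where "S = {i. i < length Bs \<and> b \<in> Bs ! i}"
    have finS: "finite S" unfolding S_def by simp
    have kS: "k \<in> S" using k unfolding S_def by simp
    define r where "r = Max S"
    have rS: "r \<in> S" unfolding r_def using finS kS Max_in by blast
    hence r: "r < length Bs" "b \<in> Bs ! r" unfolding S_def by auto
    have rmax: "\<And>i. i < length Bs \<Longrightarrow> b \<in> Bs ! i \<Longrightarrow> i \<le> r" unfolding r_def using finS S_def by simp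
    have kr: "k \<le> r" using rmax k by blast
    have F1: "\<And>i u. i < k \<Longrightarrow> u \<in> Bs ! i \<Longrightarrow> u = b" using k(3) by blast
    have F2: "\<forall>w\<in>V. E u w \<longrightarrow> w = b"
      if u: "u \<in> V" "u \<noteq> b" and ur: "\<forall>i<length Bs. u \<in> Bs ! i \<longrightarrow> i \<le> r" for u
    proof (intro ballI impI)
      fix w assume w: "w \<in> V" "E u w"
      obtain i where i: "i < length Bs" "u \<in> Bs ! i" "w \<in> Bs ! i" using edge[OF u(1) w(1) w(2)] by blast
      have "k \<le> i" using F1 i u(2) by (meson not_le)
      moreover have "i \<le> r" using ur i by blast
      ultimately have "b \<in> Bs ! i" using intv[of k i r b] k r by blast
      moreover have "u \<noteq> w" using irr w by blast
      ultimately show "w = b" using three[OF fin d i(1), of u w b] i u(2) by blast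
    qed
    have F3: "\<And>u i j. j \<le> r \<Longrightarrow> r < i \<Longrightarrow> i < length Bs \<Longrightarrow> u \<in> Bs ! j \<Longrightarrow> u \<in> Bs ! i \<Longrightarrow> u \<in> Bs ! r"
      using intv by (meson less_imp_le)
    have late: "\<exists>i<length Bs. r < i \<and> u \<in> Bs ! i" if u: "u \<in> V" "u \<noteq> b" and Eub: "E u b" for u
    proof (rule ccontr)
      assume "\<not> (\<exists>i<length Bs. r < i \<and> u \<in> Bs ! i)"
      hence "\<forall>i<length Bs. u \<in> Bs ! i \<longrightarrow> i \<le> r" by (meson not_le)
      hence "\<forall>w\<in>V. E u w \<longrightarrow> w = b" using F2 u by blast
      thus False using n2 u Eub by blast
    qed
    have nbr_r: "u \<in> Bs ! r" if u: "u \<in> V" "E b u" for u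
    proof -
      have ub: "u \<noteq> b" using irr u by blast
      obtain i where i: "i < length Bs" "r < i" "u \<in> Bs ! i" using late[OF u(1) ub] sym u by blast
      obtain j where j: "j < length Bs" "b \<in> Bs ! j" "u \<in> Bs ! j" using edge[OF bV u(1) u(2)] by blast
      have "j \<le> r" using rmax j by blast
      thus ?thesis using F3 i j by blast
    qed
    obtain c where c: "c \<in> V" "E b c" using n3 by blast
    have cb: "c \<noteq> b" using irr c by blast
    have cr: "c \<in> Bs ! r" using nbr_r c by blast
    have uniq: "\<forall>w\<in>V. E b w \<longrightarrow> w = c"
    proof (intro ballI impI)
      fix w assume w: "w \<in> V" "E b w"
      have "w \<in> Bs ! r" using nbr_r w by blast
      moreover have "w \<noteq> b" using irr w by blast
      ultimately show "w = c" using three[OF fin d r(1), of b c w] r(2) cr cb by blast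
    qed
    have "endv (V - {b}) E c"
    proof -
      have d': "dec1 (V - {b}) E (map (\<lambda>B. B - {b}) Bs)" by (rule dec1_rem[OF fin d])
      have "\<forall>i<r. map (\<lambda>B. B - {b}) Bs ! i \<subseteq> {c}"
      proof (intro allI impI subsetI)
        fix i u assume i: "i < r" and u: "u \<in> map (\<lambda>B. B - {b}) Bs ! i"
        have il: "i < length Bs" using i r by simp
        have u': "u \<in> Bs ! i" "u \<noteq> b" using u il by auto
        have uV: "u \<in> V" using bagV il u' by blast
        obtain w where w: "w \<in> V" "E u w" using n1 uV u' by blast
        have "\<exists>i'<length Bs. r < i' \<and> u \<in> Bs ! i'"
        proof (rule ccontr)
          assume "\<not> (\<exists>i'<length Bs. r < i' \<and> u \<in> Bs ! i')"
          hence "\<forall>i'<length Bs. u \<in> Bs ! i' \<longrightarrow> i' \<le> r" by (meson not_le)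
          hence all: "\<forall>w\<in>V. E u w \<longrightarrow> w = b" using F2 uV u' by blast
          hence "w = b" using w by blast
          hence "E u b" using w by simp
          thus False using n2 uV u' all by blast
        qed
        then obtain i' where i': "i' < length Bs" "r < i'" "u \<in> Bs ! i'" by blast
        have "u \<in> Bs ! r" using F3[where u=u and i=i' and j=i] i i' u' by simp
        thus "u \<in> {c}" using three[OF fin d r(1), of b c u] r(2) cr cb u' by blast
      qed
      thus ?thesis unfolding endv_def using d' r cr cb c(1)
        by (intro conjI exI[of _ "map (\<lambda>B. B - {b}) Bs"] exI[of _ r]) auto
    qed
    hence "\<exists>c\<in>V. c \<noteq> b \<and> E b c \<and> (\<forall>w\<in>V. E b w \<longrightarrow> w = c) \<and> endv (V - {b}) E c"
      using c cb uniq by blast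
  }
  thus ?thesis by blast
qed


section \<open>Numerical invariant\<close>

definition good :: "real \<Rightarrow> real \<Rightarrow> real \<Rightarrow> real \<Rightarrow> real \<Rightarrow> real \<Rightarrow> real \<Rightarrow> bool" where
  "good a0 a1 a2 a3 a4 a5 H \<longleftrightarrow>
     a0 + a1 + a4 + a5 \<le> H \<and>
     a0 + a1 + a2 + a3 + a5 \<le> sqrt 2 * H \<and>
     a0 + a1/2 + a3/2 + a4/2 + a5 \<le> H \<and>
     a0 + a1 + a2/2 + a3 + a4/2 + a5 \<le> sqrt 2 * H \<and>
     3/4*a0 + a1/2 + a2/4 + a3/2 + a4/2 + a5 \<le> H \<and>
     5/4*a0 + a1 + a2/2 + 3/4*a3 + a4/2 + a5 \<le> sqrt 2 * H \<and>
     3/4*a0 + a1/2 + a2/4 + 5/8*a3 + 3/8*a4 + 7/8*a5 \<le> H \<and>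
     9/8*a0 + 7/8*a1 + 3/8*a2 + 3/4*a3 + 5/8*a4 + 9/8*a5 \<le> sqrt 2 * H \<and>
     3/4*a0 + 9/16*a1 + 5/16*a2 + 9/16*a3 + 3/8*a4 + 13/16*a5 \<le> H"

lemma ruleL:
  assumes g: "good b0 b1 b2 b3 b4 b5 H"
    and nn: "0 \<le> b0" "0 \<le> b1" "0 \<le> b2" "0 \<le> b3" "0 \<le> b4" "0 \<le> b5"
    and h: "0 \<le> H" "5/4*H \<le> T" "T \<le> 3/2*H" "sqrt 2 * H = T" "sqrt 2 * T = 2 * H"
    and a: "a0 \<le> b0 + b1 + b2" "a1 \<le> 0" "a2 \<le> 0" "a3 \<le> 0" "a4 \<le> 0" "a5 \<le> b3 + b5"
  shows "good a0 a1 a2 a3 a4 a5 T"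
  using g unfolding good_def
  apply (elim conjE)
  apply (intro conjI)
  using nn h a by linarith+

lemma ruleN:
  assumes g: "good b0 b1 b2 b3 b4 b5 H"
    and nn: "0 \<le> b0" "0 \<le> b1" "0 \<le> b2" "0 \<le> b3" "0 \<le> b4" "0 \<le> b5"
    and h: "0 \<le> H" "5/4*H \<le> T" "T \<le> 3/2*H" "sqrt 2 * H = T" "sqrt 2 * T = 2 * H"
    and a: "a0 \<le> b3" "a1 \<le> b5" "a2 \<le> b0" "a3 \<le> b4 + b5" "a4 \<le> b2" "a5 \<le> b0 + b1"
  shows "good a0 a1 a2 a3 a4 a5 T"
  using g unfolding good_def
  apply (elim conjE)
  apply (intro conjI)
  using nn h a by linarith+

lemma ruleIso:
  assumes g: "good b0 b1 b2 b3 b4 b5 H"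
    and h: "0 \<le> H" "5/4*H \<le> T" "T \<le> 3/2*H" "sqrt 2 * H = T" "sqrt 2 * T = 2 * H"
    and a: "a0 \<le> b0" "a1 \<le> b1" "a2 \<le> b2" "a3 \<le> b3" "a4 \<le> b4" "a5 \<le> b5"
  shows "good a0 a1 a2 a3 a4 a5 T"
  using g unfolding good_def
  apply (elim conjE)
  apply (intro conjI)
  using h a by linarith+

lemma ruleI:
  assumes h: "0 \<le> H" "5/4*H \<le> T" "T \<le> 3/2*H" "sqrt 2 * H = T" "sqrt 2 * T = 2 * H"
    and f: "F \<le> H"
    and a: "a0 \<le> 0" "a1 \<le> F" "a2 \<le> 0" "a3 \<le> F" "a4 \<le> 0" "a5 \<le> 0"
  shows "good a0 a1 a2 a3 a4 a5 T"
  unfolding good_def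
  apply (intro conjI)
  using h a f by linarith+

lemma sqrt2_bounds: "5/4 \<le> sqrt (2::real)" "sqrt (2::real) \<le> 3/2"
proof -
  have "sqrt ((5/4)^2) \<le> sqrt (2::real)" by (intro real_sqrt_le_mono) (simp add: power2_eq_square)
  thus "5/4 \<le> sqrt (2::real)" by simp
  have "sqrt (2::real) \<le> sqrt ((3/2)^2)" by (intro real_sqrt_le_mono) (simp add: power2_eq_square)
  thus "sqrt (2::real) \<le> 3/2" by simp
qed

lemma pow_step:
  assumes "1 \<le> n"
  shows "(2::real) powr (real n / 2) = sqrt 2 * 2 powr (real (n - 1) / 2)"
proof -
  have r: "real n = 1 + real (n - 1)" using assms by (simp add: of_nat_diff)
  have "real n / 2 = 1/2 + real (n - 1) / 2" using r by linarith
  hence "(2::real) powr (real n / 2) = 2 powr (1/2) * 2 powr (real (n - 1) / 2)"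
    by (simp only: powr_add)
  also have "(2::real) powr (1/2) = sqrt 2" by (rule powr_half_sqrt) simp
  finally show ?thesis .
qed

definition goodV :: "'a set \<Rightarrow> ('a \<Rightarrow> 'a \<Rightarrow> bool) \<Rightarrow> 'a \<Rightarrow> real \<Rightarrow> bool" where
  "goodV V E b H = good (real (card (st_safe V E b))) (real (card (st_self V E b))) (real (card (st_none V E b)))
     (real (card (st_undom V E b))) (real (card (st_frag V E b))) (real (card (st_ok V E b))) H"

lemma mds_empty: "{D. minimal_dominating_set {} E D} = {{}}"
proof -
  have "minimal_dominating_set {} E D \<longleftrightarrow> D = {}" for D unfolding mds_iff by blast
  thus ?thesis by blast
qed

lemma main_ind:
  fixes V :: "'a set"
  assumes fin: "finite V" and irr: "\<forall>x. \<not> E x x" and sym: "\<forall>p q. E p q \<longrightarrow> E q p"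
  shows "(\<forall>Bs. dec1 V E Bs \<longrightarrow> real (card {D. minimal_dominating_set V E D}) \<le> 2 powr (real (card V) / 2))
     \<and> (\<forall>b. endv V E b \<longrightarrow> goodV V E b (2 powr (real (card V) / 2)))"
  using fin
proof (induction "card V" arbitrary: V rule: less_induct)
  case less
  note fin = less.prems
  define H where "H = (2::real) powr (real (card V) / 2)"
  have partB: "goodV V E b H" if e: "endv V E b" for b
  proof -
    have bV: "b \<in> V" using e by (simp add: endv_def)
    have n1: "1 \<le> card V" using bV fin by (metis One_nat_def card_gt_0_iff empty_iff less_eq_Suc_le)
    define H' where "H' = (2::real) powr (real (card V - 1) / 2)"
    have HH: "H = sqrt 2 * H'" unfolding H_def H'_def by (rule pow_step[OF n1])
    have H'0: "0 \<le> H'" unfolding H'_def by simp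
    have h: "0 \<le> H'" "5/4*H' \<le> H" "H \<le> 3/2*H'" "sqrt 2 * H' = H" "sqrt 2 * H = 2 * H'"
    proof -
      show "0 \<le> H'" by (rule H'0)
      show "5/4*H' \<le> H" unfolding HH using sqrt2_bounds(1) H'0 by (intro mult_right_mono) auto
      show "H \<le> 3/2*H'" unfolding HH using sqrt2_bounds(2) H'0 by (intro mult_right_mono) auto
      show "sqrt 2 * H' = H" by (simp add: HH)
      show "sqrt 2 * H = 2 * H'" by (simp add: HH mult.assoc[symmetric])
    qed
    have cardrem: "card (V - {x}) < card V" "card (V - {x}) = card V - 1" if "x \<in> V" for x
      using that fin by (auto simp: card_Diff_singleton card_gt_0_iff intro: diff_less)
    have IH: "(\<forall>Bs. dec1 (V - {x}) E Bs \<longrightarrow> real (card {D. minimal_dominating_set (V - {x}) E D}) \<le> H')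
      \<and> (\<forall>b. endv (V - {x}) E b \<longrightarrow> goodV (V - {x}) E b H')" if "x \<in> V" for x
      using less.hyps[OF cardrem(1)[OF that]] fin cardrem(2)[OF that] unfolding H'_def by simp
    consider (ciso) u where "u \<in> V" "u \<noteq> b" "\<forall>w\<in>V. \<not> E u w"
      | (cleaf) l where "l \<in> V" "l \<noteq> b" "E l b" "\<forall>w\<in>V. E l w \<longrightarrow> w = b"
      | (cisob) "\<forall>w\<in>V. \<not> E b w"
      | (cnbr) c where "c \<in> V" "c \<noteq> b" "E b c" "\<forall>w\<in>V. E b w \<longrightarrow> w = c" "endv (V - {b}) E c"
      using struct[OF fin irr sym e] by blast
    thus ?thesis
    proof cases
      case ciso
      interpret isorem V E b u by (unfold_locales; use sym ciso bV in blast)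
      have g: "goodV (V - {u}) E b H'"
        by (rule conjunct2[OF IH[OF ciso(1)], rule_format, OF endv_rem[OF fin e ciso(2)]])
      note t = trans_iso[OF fin]
      show ?thesis using g unfolding goodV_def
        by (rule ruleIso[OF _ h]) (use t in simp_all)
    next
      case cleaf
      interpret leafrem V E b l by (unfold_locales; use sym cleaf bV in blast)
      have g: "goodV (V - {l}) E b H'"
        by (rule conjunct2[OF IH[OF cleaf(1)], rule_format, OF endv_rem[OF fin e cleaf(2)]])
      note t = trans_leaf[OF fin]
      show ?thesis using g unfolding goodV_def
        by (rule ruleL[OF _ _ _ _ _ _ _ h]) (use t in simp_all)
    next
      case cisob
      interpret isob V E b by (unfold_locales; use sym cisob bV in blast)
      obtain Bs where "dec1 (V - {b}) E Bs" using endv_dec[OF fin e] by blast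
      hence f: "real (card {D. minimal_dominating_set (V - {b}) E D}) \<le> H'"
        by (rule conjunct1[OF IH[OF bV], rule_format])
      note t = trans_isob[OF fin]
      show ?thesis unfolding goodV_def
        by (rule ruleI[OF h f]) (use t in simp_all)
    next
      case cnbr
      interpret nbrrem V E b c by (unfold_locales; use sym cnbr bV in blast)
      have g: "goodV (V - {b}) E c H'"
        by (rule conjunct2[OF IH[OF bV], rule_format, OF cnbr(5)])
      note t = trans_nbr[OF fin]
      show ?thesis using g unfolding goodV_def
        by (rule ruleN[OF _ _ _ _ _ _ _ h]) (use t in simp_all)
    qed
  qed
  have partA: "real (card {D. minimal_dominating_set V E D}) \<le> H" if d: "dec1 V E Bs" for Bs
  proof (cases "V = {}")
    case True thus ?thesis unfolding H_def by (simp add: mds_empty)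
  next
    case False
    obtain b where e: "endv V E b" using end_exists[OF fin d False] by blast
    have bV: "b \<in> V" using e by (simp add: endv_def)
    have "goodV V E b H" by (rule partB[OF e])
    hence "real (card (st_safe V E b)) + real (card (st_self V E b)) + real (card (st_frag V E b)) + real (card (st_ok V E b)) \<le> H"
      unfolding goodV_def good_def by linarith
    moreover have "card {D. minimal_dominating_set V E D} \<le> card (st_safe V E b) + card (st_self V E b) + card (st_frag V E b) + card (st_ok V E b)"
      by (rule final_le[OF fin bV])
    ultimately show ?thesis by linarith
  qed
  show ?case using partA partB unfolding H_def by blast
qed

lemma pw_dec1:
  assumes sg: "simple_graph V E" and pw: "pathwidth V E \<le> 1"
  shows "\<exists>Bs. dec1 V E Bs"
proof -
  have fin: "finite V" and inV: "\<forall>x y. E x y \<longrightarrow> x \<in> V \<and> y \<in> V" using sg by (auto simp: simple_graph_def)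
  let ?P = "\<lambda>k. \<exists>Bs. path_decomposition V E Bs \<and> (\<forall>B \<in> set Bs. card B \<le> k + 1)"
  have "path_decomposition V E [V]" using inV unfolding path_decomposition_def by auto
  hence ex: "?P (card V)" by auto
  have "?P (pathwidth V E)" unfolding pathwidth_def by (rule LeastI[of ?P, OF ex])
  then obtain Bs where Bs: "path_decomposition V E Bs" "\<forall>B \<in> set Bs. card B \<le> pathwidth V E + 1" by blast
  have "dec1 V E Bs" using Bs pw unfolding path_decomposition_def dec1_def by fastforce
  thus ?thesis by blast
qed

lemma part1:
  fixes V :: "'a set"
  assumes sg: "simple_graph V E" and pw: "pathwidth V E \<le> 1"
  shows "real (card {D. minimal_dominating_set V E D}) \<le> 2 powr (real (card V) / 2)"
proof -
  have fin: "finite V" and irr: "\<forall>x. \<not> E x x" and sym: "\<forall>p q. E p q \<longrightarrow> E q p"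
    using sg by (auto simp: simple_graph_def)
  obtain Bs where "dec1 V E Bs" using pw_dec1[OF sg pw] by blast
  thus ?thesis using main_ind[OF fin irr sym] by blast
qed

lemma K2_E: "({x, y} = {0::nat, 1}) \<longleftrightarrow> (x = 0 \<and> y = 1 \<or> x = 1 \<and> y = 0)"
  by (auto simp: doubleton_eq_iff)

lemma K2_mds: "minimal_dominating_set {0::nat, 1} (\<lambda>x y. {x, y} = {0::nat, 1}) D \<longleftrightarrow> D = {0} \<or> D = {1}"
proof
  assume m: "minimal_dominating_set {0::nat, 1} (\<lambda>x y. {x, y} = {0::nat, 1}) D"
  hence s: "D \<subseteq> {0, 1}" and d: "\<forall>v\<in>{0::nat, 1}. dm (\<lambda>x y. {x, y} = {0::nat, 1}) D v"
    and p: "\<forall>u\<in>D. \<exists>w. priv {0, 1} (\<lambda>x y. {x, y} = {0::nat, 1}) D w u" by (auto simp: mds_iff)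
  have ne: "D \<noteq> {}" using d by (auto simp: dm_def)
  have "\<not> (0 \<in> D \<and> 1 \<in> D)"
  proof
    assume a: "0 \<in> D \<and> 1 \<in> D"
    then obtain w where w: "priv {0, 1} (\<lambda>x y. {x, y} = {0::nat, 1}) D w 0" using p by blast
    thus False using a unfolding priv_def K2_E by auto
  qed
  thus "D = {0} \<or> D = {1}" using s ne by auto
next
  assume "D = {0} \<or> D = {1}"
  thus "minimal_dominating_set {0::nat, 1} (\<lambda>x y. {x, y} = {0::nat, 1}) D"
    unfolding mds_iff dm_def priv_def K2_E by auto
qed

lemma part2:
  "let V = {0::nat, 1}; E = (\<lambda>x y. {x, y} = {0::nat, 1}) in
     simple_graph V E \<and> pathwidth V E \<le> 1 \<and>
     real (card {D. minimal_dominating_set V E D}) = 2 powr (real (card V) / 2)"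
  unfolding Let_def
proof (intro conjI)
  show "simple_graph {0::nat, 1} (\<lambda>x y. {x, y} = {0::nat, 1})"
    unfolding simple_graph_def K2_E by auto
  have "path_decomposition {0::nat, 1} (\<lambda>x y. {x, y} = {0::nat, 1}) [{0, 1}]"
    unfolding path_decomposition_def K2_E by auto
  hence "\<exists>Bs. path_decomposition {0::nat, 1} (\<lambda>x y. {x, y} = {0::nat, 1}) Bs \<and> (\<forall>B \<in> set Bs. card B \<le> 1 + 1)"
    by (intro exI[of _ "[{0, 1}]"]) auto
  thus "pathwidth {0::nat, 1} (\<lambda>x y. {x, y} = {0::nat, 1}) \<le> 1"
    unfolding pathwidth_def by (rule Least_le)
  have "{D. minimal_dominating_set {0::nat, 1} (\<lambda>x y. {x, y} = {0::nat, 1}) D} = {{0}, {1}}"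
    using K2_mds by blast
  thus "real (card {D. minimal_dominating_set {0::nat, 1} (\<lambda>x y. {x, y} = {0::nat, 1}) D}) = 2 powr (real (card {0::nat, 1}) / 2)"
    by simp
qed

theorem mainTheorem7:
  shows "(\<forall>(V :: 'a set) E. simple_graph V E \<and> pathwidth V E \<le> 1 \<longrightarrow>
            real (card {D. minimal_dominating_set V E D}) \<le> 2 powr (real (card V) / 2))
       \<and> (let V = {0::nat, 1}; E = (\<lambda>x y. {x, y} = {0::nat, 1}) in
            simple_graph V E \<and> pathwidth V E \<le> 1 \<and>
            real (card {D. minimal_dominating_set V E D}) = 2 powr (real (card V) / 2))"
  using part1 part2 by blast

end
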